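(* For every positive integer $n$ and every function $\sigma\colon E(K_{4n})\to\{-1,1\}$ with $\sigma\left(E(K_{4n})\right)=0$, there is a perfect matching $M$ in $K_{4n}$ with $\sigma(M)=0$.
   Context: $K_{4n}$ denotes the complete graph on $4n$ vertices and $E(K_{4n})$ its edge set. For a set $F$ of edges, $\sigma(F)=\sum_{e\in F}\sigma(e)$. *)

theory Defs
  imports Main
begin

definition complete_edges :: "'a set \<Rightarrow> 'a set set" where
  "complete_edges V = {e. e \<subseteq> V \<and> card e = 2}"

definition perfect_matching_complete :: "'a set \<Rightarrow> 'a set set \<Rightarrow> bool" where
  "perfect_matching_complete V M \<longleftrightarrow>
     M \<subseteq> complete_edges V \<and> (\<forall>v\<in>V. \<exists>!e. e \<in> M \<and> v \<in> e)"

end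

theory Submission
  imports Defs
begin


abbreviation C2 where "C2 \<equiv> complete_edges"
abbreviation PM where "PM \<equiv> perfect_matching_complete"

lemma C2_mem: "e \<in> C2 V \<longleftrightarrow> e \<subseteq> V \<and> card e = 2"
  by (simp add: complete_edges_def)

lemma PM_iff: "PM V M \<longleftrightarrow> M \<subseteq> C2 V \<and> \<Union>M = V \<and> (\<forall>e\<in>M. \<forall>f\<in>M. e \<noteq> f \<longrightarrow> e \<inter> f = {})"
proof
  assume H: "PM V M"
  hence sub: "M \<subseteq> C2 V" and U: "\<forall>v\<in>V. \<exists>!e. e \<in> M \<and> v \<in> e"
    by (auto simp: perfect_matching_complete_def)
  have "\<Union>M = V"
  proof
    show "\<Union>M \<subseteq> V" using sub by (force simp: complete_edges_def)
    show "V \<subseteq> \<Union>M" using U by blast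
  qed
  moreover have "\<forall>e\<in>M. \<forall>f\<in>M. e \<noteq> f \<longrightarrow> e \<inter> f = {}"
  proof (intro ballI impI)
    fix e f assume "e \<in> M" "f \<in> M" "e \<noteq> f"
    show "e \<inter> f = {}"
    proof (rule ccontr)
      assume "e \<inter> f \<noteq> {}"
      then obtain v where "v \<in> e" "v \<in> f" by blast
      hence "v \<in> V" using sub \<open>e\<in>M\<close> by (force simp: complete_edges_def)
      thus False using U \<open>v \<in> e\<close> \<open>v \<in> f\<close> \<open>e\<in>M\<close> \<open>f\<in>M\<close> \<open>e\<noteq>f\<close> by blast
    qed
  qed
  ultimately show "M \<subseteq> C2 V \<and> \<Union>M = V \<and> (\<forall>e\<in>M. \<forall>f\<in>M. e \<noteq> f \<longrightarrow> e \<inter> f = {})"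
    using sub by blast
next
  assume "M \<subseteq> C2 V \<and> \<Union>M = V \<and> (\<forall>e\<in>M. \<forall>f\<in>M. e \<noteq> f \<longrightarrow> e \<inter> f = {})"
  thus "PM V M" unfolding perfect_matching_complete_def by blast
qed

lemma PM_edge: "PM V M \<Longrightarrow> e \<in> M \<Longrightarrow> e \<subseteq> V \<and> card e = 2"
  unfolding PM_iff by (auto simp: complete_edges_def)

lemma PM_edge2: "PM V M \<Longrightarrow> e \<in> M \<Longrightarrow> \<exists>x y. e = {x,y} \<and> x \<noteq> y \<and> x \<in> V \<and> y \<in> V"
  using PM_edge[of V M e] by (auto simp: card_2_iff)

lemma PM_uniq: "PM V M \<Longrightarrow> e \<in> M \<Longrightarrow> f \<in> M \<Longrightarrow> v \<in> e \<Longrightarrow> v \<in> f \<Longrightarrow> e = f"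
  unfolding PM_iff by blast

lemma PM_cover: "PM V M \<Longrightarrow> v \<in> V \<Longrightarrow> \<exists>e\<in>M. v \<in> e"
  unfolding PM_iff by blast

lemma C2_finite: "finite V \<Longrightarrow> finite (C2 V)"
  by (rule finite_subset[of _ "Pow V"]) (auto simp: complete_edges_def)

lemma PM_finite: "finite V \<Longrightarrow> PM V M \<Longrightarrow> finite M"
  using C2_finite unfolding PM_iff by (blast intro: finite_subset)

lemma PM_card: assumes "finite V" "PM V M" shows "card V = 2 * card M"
proof -
  have "card (\<Union>M) = sum card M"
    apply (rule card_Union_disjoint)
    using assms unfolding PM_iff pairwise_def disjnt_def
    by (auto intro: finite_subset)
  also have "\<dots> = sum (\<lambda>_. 2) M"
    using PM_edge[OF assms(2)] by (intro sum.cong) auto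
  finally show ?thesis using assms(2) unfolding PM_iff by simp
qed

lemma PM_union:
  assumes "PM V1 M1" "PM V2 M2" "V1 \<inter> V2 = {}"
  shows "PM (V1 \<union> V2) (M1 \<union> M2)"
proof -
  have a: "\<And>e. e \<in> M1 \<Longrightarrow> e \<subseteq> V1" "\<And>e. e \<in> M2 \<Longrightarrow> e \<subseteq> V2"
    using PM_edge assms by blast+
  show ?thesis using assms(1,2) a assms(3) unfolding PM_iff complete_edges_def
    by (auto 0 3)
qed

lemma PM_pair: "a \<noteq> b \<Longrightarrow> PM {a,b} {{a,b}}"
  unfolding PM_iff complete_edges_def by auto

lemma PM_remove:
  assumes "PM V M" "e \<in> M" shows "PM (V - e) (M - {e})"
proof -
  have d: "\<And>f. f \<in> M \<Longrightarrow> f \<noteq> e \<Longrightarrow> f \<inter> e = {}" using assms unfolding PM_iff by blast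
  have s: "\<And>f. f \<in> M \<Longrightarrow> f \<subseteq> V \<and> card f = 2" using PM_edge[OF assms(1)] by blast
  have u: "\<Union>M = V" using assms unfolding PM_iff by blast
  have "M - {e} \<subseteq> C2 (V - e)" using d s unfolding complete_edges_def by blast
  moreover have "\<Union>(M - {e}) = V - e" using d u by blast
  moreover have "\<forall>f\<in>M-{e}. \<forall>g\<in>M-{e}. f \<noteq> g \<longrightarrow> f \<inter> g = {}" using assms unfolding PM_iff by blast
  ultimately show ?thesis unfolding PM_iff by blast
qed

lemma PM_two: "distinct [a,b,c,d] \<Longrightarrow> PM {a,b,c,d} {{a,b},{c,d}}"
  using PM_union[OF PM_pair[of a b] PM_pair[of c d]] by (auto simp: insert_commute)

definition sw :: "nat set set \<Rightarrow> nat \<Rightarrow> nat \<Rightarrow> nat \<Rightarrow> nat \<Rightarrow> nat set set" where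
  "sw M a b c d = M - {{a,b},{c,d}} \<union> {{a,c},{b,d}}"

lemma PM_sw:
  assumes "PM V M" "{a,b} \<in> M" "{c,d} \<in> M" "distinct [a,b,c,d]"
  shows "PM V (sw M a b c d)"
proof -
  have ne: "{a,b} \<noteq> {c,d}" using assms(4) by (auto simp: doubleton_eq_iff)
  have "PM (V - {a,b} - {c,d}) (M - {{a,b}} - {{c,d}})"
    using PM_remove[OF PM_remove[OF assms(1) assms(2)], of "{c,d}"] assms(3) ne by auto
  moreover have "V - {a,b} - {c,d} = V - {a,b,c,d}" "M - {{a,b}} - {{c,d}} = M - {{a,b},{c,d}}" by auto
  ultimately have p1: "PM (V - {a,b,c,d}) (M - {{a,b},{c,d}})" by simp
  have p2: "PM {a,c,b,d} {{a,c},{b,d}}" using PM_two[of a c b d] assms(4) by auto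
  have sub: "{a,b,c,d} \<subseteq> V" using PM_edge[OF assms(1) assms(2)] PM_edge[OF assms(1) assms(3)] by auto
  have "PM ((V - {a,b,c,d}) \<union> {a,c,b,d}) (M - {{a,b},{c,d}} \<union> {{a,c},{b,d}})"
    by (rule PM_union[OF p1 p2]) auto
  moreover have "(V - {a,b,c,d}) \<union> {a,c,b,d} = V" using sub by auto
  ultimately show ?thesis unfolding sw_def by simp
qed



lemma sum_sw:
  fixes s :: "nat set \<Rightarrow> int"
  assumes "PM V M" "finite M" "{a,b} \<in> M" "{c,d} \<in> M" "distinct [a,b,c,d]"
  shows "sum s (sw M a b c d) = sum s M - s {a,b} - s {c,d} + s {a,c} + s {b,d}"
proof -
  have ne: "{a,b} \<noteq> {c,d}" "{a,c} \<noteq> {b,d}" using assms(5) by (auto simp: doubleton_eq_iff)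
  have n1: "{a,c} \<notin> M"
  proof
    assume "{a,c} \<in> M"
    hence "{a,c} = {a,b}" using PM_uniq[OF assms(1) _ assms(3), of "{a,c}" a] by auto
    thus False using assms(5) by (auto simp: doubleton_eq_iff)
  qed
  have n2: "{b,d} \<notin> M"
  proof
    assume "{b,d} \<in> M"
    hence "{b,d} = {a,b}" using PM_uniq[OF assms(1) _ assms(3), of "{b,d}" b] by auto
    thus False using assms(5) by (auto simp: doubleton_eq_iff)
  qed
  have "sum s (sw M a b c d) = sum s (M - {{a,b},{c,d}}) + sum s {{a,c},{b,d}}"
    unfolding sw_def using assms(2) n1 n2 by (intro sum.union_disjoint) auto
  moreover have "sum s (M - {{a,b},{c,d}}) = sum s M - sum s {{a,b},{c,d}}"
    using assms(2,3,4) by (intro sum_diff) auto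
  ultimately show ?thesis using ne by simp
qed

lemma C2_four:
  assumes "distinct [a,b,c,d]"
  shows "C2 {a,b,c,d} = {{a,b},{a,c},{a,d},{b,c},{b,d},{c,d}}"
proof
  show "C2 {a,b,c,d} \<subseteq> {{a,b},{a,c},{a,d},{b,c},{b,d},{c,d}}"
  proof
    fix e assume "e \<in> C2 {a,b,c,d}"
    then obtain x y where "e = {x,y}" "x \<noteq> y" "x \<in> {a,b,c,d}" "y \<in> {a,b,c,d}"
      unfolding complete_edges_def card_2_iff by blast
    thus "e \<in> {{a,b},{a,c},{a,d},{b,c},{b,d},{c,d}}" by (auto simp: insert_commute)
  qed
  show "{{a,b},{a,c},{a,d},{b,c},{b,d},{c,d}} \<subseteq> C2 {a,b,c,d}"
    using assms unfolding complete_edges_def by auto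
qed

definition Yc :: "(nat set \<Rightarrow> int) \<Rightarrow> nat set set \<Rightarrow> int" where
  "Yc s P = sum s (C2 (\<Union>P)) - sum s P"

lemma Y_expand:
  assumes "distinct [a,b,c,d]"
  shows "Yc s {{a,b},{c,d}} = s {a,c} + s {a,d} + s {b,c} + s {b,d}"
proof -
  have u: "\<Union>{{a,b},{c,d}} = {a,b,c,d}" by auto
  show ?thesis unfolding Yc_def u C2_four[OF assms] using assms
    by (simp add: doubleton_eq_iff insert_commute)
qed

lemma C2_insert:
  assumes "x \<notin> A"
  shows "C2 (insert x A) = C2 A \<union> (\<lambda>y. {x,y}) ` A"
proof
  show "C2 (insert x A) \<subseteq> C2 A \<union> (\<lambda>y. {x,y}) ` A"
  proof
    fix e assume "e \<in> C2 (insert x A)"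
    then obtain u v where e: "e = {u,v}" "u \<noteq> v" "u \<in> insert x A" "v \<in> insert x A"
      unfolding complete_edges_def card_2_iff by blast
    show "e \<in> C2 A \<union> (\<lambda>y. {x,y}) ` A"
    proof (cases "u = x \<or> v = x")
      case True thus ?thesis using e by (auto simp: insert_commute)
    next
      case False thus ?thesis using e unfolding complete_edges_def by auto
    qed
  qed
  have "\<And>y. y \<in> A \<Longrightarrow> card {x,y} = 2" using assms by (metis card_2_iff)
  thus "C2 A \<union> (\<lambda>y. {x,y}) ` A \<subseteq> C2 (insert x A)"
    unfolding complete_edges_def by auto
qed

lemma sum_C2_insert:
  assumes "finite A" "x \<notin> A"
  shows "sum g (C2 (insert x A)) = sum g (C2 A) + (\<Sum>y\<in>A. g {x,y})"
proof -
  have "sum g (C2 (insert x A)) = sum g (C2 A) + sum g ((\<lambda>y. {x,y}) ` A)"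
    unfolding C2_insert[OF assms(2)]
    using assms C2_finite[OF assms(1)] by (intro sum.union_disjoint) (auto simp: complete_edges_def card_2_iff)
  moreover have "sum g ((\<lambda>y. {x,y}) ` A) = (\<Sum>y\<in>A. g {x,y})"
    using assms by (intro sum.reindex_cong[where l="\<lambda>y. {x,y}"]) (auto simp: inj_on_def doubleton_eq_iff)
  ultimately show ?thesis by simp
qed

lemma pair_sum:
  fixes t :: "'a \<Rightarrow> int"
  assumes "finite M"
  shows "(\<Sum>P\<in>C2 M. \<Sum>e\<in>P. t e) = (int (card M) - 1) * sum t M"
  using assms
proof (induction M rule: finite_induct)
  case empty
  have "C2 ({}::'a set) = {}" unfolding complete_edges_def by auto
  thus ?case by simp
next
  case (insert x A)
  have "(\<Sum>P\<in>C2 (insert x A). \<Sum>e\<in>P. t e) = (\<Sum>P\<in>C2 A. \<Sum>e\<in>P. t e) + (\<Sum>y\<in>A. \<Sum>e\<in>{x,y}. t e)"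
    by (rule sum_C2_insert[OF insert(1,2)])
  also have "(\<Sum>y\<in>A. \<Sum>e\<in>{x,y}. t e) = (\<Sum>y\<in>A. t x + t y)"
  proof (intro sum.cong refl)
    fix y assume "y \<in> A"
    hence "x \<noteq> y" using insert(2) by auto
    thus "(\<Sum>e\<in>{x,y}. t e) = t x + t y" by simp
  qed
  also have "\<dots> = int (card A) * t x + sum t A" by (simp add: sum.distrib)
  finally show ?case using insert by (simp add: algebra_simps)
qed



lemma card2_sub_eq: "card x = 2 \<Longrightarrow> card f = 2 \<Longrightarrow> x \<subseteq> f \<Longrightarrow> x = f"
  by (metis card_subset_eq card.infinite zero_neq_numeral)

lemma decomp_set:
  assumes e2: "card e = 2" and A: "\<forall>f\<in>A. card f = 2" and dis: "\<forall>f\<in>A. \<forall>g\<in>A. f \<noteq> g \<longrightarrow> f \<inter> g = {}"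
    and eU: "e \<inter> \<Union>A = {}"
  shows "C2 (e \<union> \<Union>A) = (C2 (\<Union>A) \<union> {e}) \<union> (\<Union>f\<in>A. C2 (e \<union> f) - {e,f})"
proof
  show "C2 (e \<union> \<Union>A) \<subseteq> (C2 (\<Union>A) \<union> {e}) \<union> (\<Union>f\<in>A. C2 (e \<union> f) - {e,f})"
  proof
    fix x assume x: "x \<in> C2 (e \<union> \<Union>A)"
    hence xs: "x \<subseteq> e \<union> \<Union>A" and x2: "card x = 2" by (auto simp: complete_edges_def)
    show "x \<in> (C2 (\<Union>A) \<union> {e}) \<union> (\<Union>f\<in>A. C2 (e \<union> f) - {e,f})"
    proof (cases "x \<subseteq> \<Union>A")
      case True thus ?thesis using x2 by (auto simp: complete_edges_def)
    next
      case False
      show ?thesis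
      proof (cases "x \<subseteq> e")
        case True thus ?thesis using card2_sub_eq[OF x2 e2] by auto
      next
        case False2: False
        obtain u where u: "u \<in> x" "u \<notin> \<Union>A" using False by blast
        hence ue: "u \<in> e" using xs by blast
        obtain v where v: "v \<in> x" "v \<notin> e" using False2 by blast
        then obtain f where f: "f \<in> A" "v \<in> f" using xs by blast
        have uv: "u \<noteq> v" using ue v by blast
        have "x = {u,v}"
          using x2 u(1) v(1) uv by (auto simp: card_2_iff)
        moreover have "u \<notin> f" using u f by blast
        ultimately have "x \<in> C2 (e \<union> f) - {e,f}"
          using ue f v x2 by (auto simp: complete_edges_def)
        thus ?thesis using f by blast
      qed
    qed
  qed
  show "(C2 (\<Union>A) \<union> {e}) \<union> (\<Union>f\<in>A. C2 (e \<union> f) - {e,f}) \<subseteq> C2 (e \<union> \<Union>A)"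
    using e2 by (auto simp: complete_edges_def)
qed

lemma decomp:
  fixes s :: "nat set \<Rightarrow> int"
  assumes "finite A" "\<forall>e\<in>A. card e = 2" "\<forall>e\<in>A. \<forall>f\<in>A. e \<noteq> f \<longrightarrow> e \<inter> f = {}"
  shows "sum s (C2 (\<Union>A)) = sum s A + (\<Sum>P\<in>C2 A. Yc s P)"
  using assms
proof (induction A rule: finite_induct)
  case empty
  have "C2 ({}::nat set set) = {}" "C2 ({}::nat set) = {}" unfolding complete_edges_def by auto
  thus ?case by simp
next
  case (insert e A)
  have e2: "card e = 2" and A2: "\<forall>f\<in>A. card f = 2" using insert.prems by auto
  have dis: "\<forall>f\<in>A. \<forall>g\<in>A. f \<noteq> g \<longrightarrow> f \<inter> g = {}" using insert.prems by auto
  have disE: "\<forall>f\<in>A. e \<inter> f = {}"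
  proof
    fix f assume f: "f \<in> A"
    hence "e \<noteq> f" using insert.hyps(2) by blast
    thus "e \<inter> f = {}" using insert.prems(2) f by (metis insertCI)
  qed
  hence eU: "e \<inter> \<Union>A = {}" by blast
  have finE: "finite e" using e2 by (metis card.infinite zero_neq_numeral)
  have finA: "\<forall>f\<in>A. finite f" using A2 by (metis card.infinite zero_neq_numeral)
  have finU: "finite (\<Union>A)" using insert.hyps(1) finA by blast
  have IH: "sum s (C2 (\<Union>A)) = sum s A + (\<Sum>P\<in>C2 A. Yc s P)"
    using insert.IH A2 dis by blast
  have fam_fin: "\<forall>f\<in>A. finite (C2 (e \<union> f) - {e,f})"
  proof
    fix f assume "f \<in> A"
    hence "finite (e \<union> f)" using finE finA by simp
    thus "finite (C2 (e \<union> f) - {e,f})" by (intro finite_Diff C2_finite)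
  qed
  have fam_dis: "\<forall>f\<in>A. \<forall>g\<in>A. f \<noteq> g \<longrightarrow> (C2 (e \<union> f) - {e,f}) \<inter> (C2 (e \<union> g) - {e,g}) = {}"
  proof (intro ballI impI)
    fix f g assume fg: "f \<in> A" "g \<in> A" "f \<noteq> g"
    show "(C2 (e \<union> f) - {e,f}) \<inter> (C2 (e \<union> g) - {e,g}) = {}"
    proof (rule ccontr)
      assume "(C2 (e \<union> f) - {e,f}) \<inter> (C2 (e \<union> g) - {e,g}) \<noteq> {}"
      then obtain x where "x \<in> C2 (e \<union> f) - {e,f}" "x \<in> C2 (e \<union> g) - {e,g}" by blast
      hence x: "x \<subseteq> e \<union> f" "x \<subseteq> e \<union> g" "card x = 2" "x \<noteq> e"
        by (simp_all add: complete_edges_def)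
      have "\<not> x \<subseteq> e" using card2_sub_eq[OF x(3) e2] x(4) by blast
      then obtain v where "v \<in> x" "v \<notin> e" by blast
      hence "v \<in> f" "v \<in> g" using x by auto
      thus False using dis fg by blast
    qed
  qed
  have part_dis: "(C2 (\<Union>A) \<union> {e}) \<inter> (\<Union>f\<in>A. C2 (e \<union> f) - {e,f}) = {}"
  proof (rule ccontr)
    assume "(C2 (\<Union>A) \<union> {e}) \<inter> (\<Union>f\<in>A. C2 (e \<union> f) - {e,f}) \<noteq> {}"
    then obtain x f where f: "f \<in> A" and x: "x \<in> C2 (e \<union> f) - {e,f}" and xo: "x \<in> C2 (\<Union>A) \<union> {e}" by blast
    hence xU: "x \<subseteq> \<Union>A" and x2: "card x = 2" and xs: "x \<subseteq> e \<union> f" and xf: "x \<noteq> f"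
      by (auto simp: complete_edges_def)
    hence "x \<subseteq> f" using eU by blast
    thus False using card2_sub_eq[OF x2] A2 f xf by blast
  qed
  have eC: "e \<notin> C2 (\<Union>A)"
  proof
    assume "e \<in> C2 (\<Union>A)"
    hence "e \<subseteq> \<Union>A" by (simp add: complete_edges_def)
    hence "e = {}" using eU by blast
    thus False using e2 by simp
  qed
  have "sum s (C2 (e \<union> \<Union>A)) = sum s (C2 (\<Union>A) \<union> {e}) + sum s (\<Union>f\<in>A. C2 (e \<union> f) - {e,f})"
    unfolding decomp_set[OF e2 A2 dis eU]
    using C2_finite[OF finU] fam_fin insert.hyps(1) part_dis by (intro sum.union_disjoint) auto
  also have "sum s (C2 (\<Union>A) \<union> {e}) = sum s (C2 (\<Union>A)) + s e"
    using C2_finite[OF finU] eC by simp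
  also have "sum s (\<Union>f\<in>A. C2 (e \<union> f) - {e,f}) = (\<Sum>f\<in>A. sum s (C2 (e \<union> f) - {e,f}))"
    by (rule sum.UNION_disjoint[OF insert.hyps(1) fam_fin fam_dis])
  also have "\<dots> = (\<Sum>f\<in>A. Yc s {e,f})"
  proof (intro sum.cong refl)
    fix f assume f: "f \<in> A"
    have ef: "e \<noteq> f" using f insert.hyps(2) by blast
    have sub: "{e,f} \<subseteq> C2 (e \<union> f)" using e2 A2 f by (auto simp: complete_edges_def)
    have "sum s (C2 (e \<union> f) - {e,f}) = sum s (C2 (e \<union> f)) - sum s {e,f}"
      using C2_finite[of "e \<union> f"] finE finA f sub by (intro sum_diff) auto
    thus "sum s (C2 (e \<union> f) - {e,f}) = Yc s {e,f}" unfolding Yc_def by simp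
  qed
  finally have main: "sum s (C2 (e \<union> \<Union>A)) = sum s (C2 (\<Union>A)) + s e + (\<Sum>f\<in>A. Yc s {e,f})" .
  have "(\<Sum>P\<in>C2 (insert e A). Yc s P) = (\<Sum>P\<in>C2 A. Yc s P) + (\<Sum>f\<in>A. Yc s {e,f})"
    by (rule sum_C2_insert[OF insert.hyps(1,2)])
  thus ?case using main IH insert.hyps by simp
qed



lemma sum_pm1_even:
  fixes s :: "'a \<Rightarrow> int"
  assumes "finite A" "\<forall>x\<in>A. s x \<in> {-1,1}"
  shows "even (sum s A) \<longleftrightarrow> even (card A)"
  using assms
proof (induction A rule: finite_induct)
  case empty thus ?case by simp
next
  case (insert x A)
  have "odd (s x)" using insert.prems by auto
  thus ?case using insert by auto
qed

lemma PM_sub_eq: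
  assumes "PM V M1" "PM V M2" "M1 \<subseteq> M2" shows "M1 = M2"
proof
  show "M2 \<subseteq> M1"
  proof
    fix f assume f: "f \<in> M2"
    then obtain x y where "f = {x,y}" "x \<in> V" using PM_edge2[OF assms(2)] by blast
    then obtain g where "g \<in> M1" "x \<in> g" using PM_cover[OF assms(1)] by blast
    hence "g = f" using PM_uniq[OF assms(2), of g f x] assms(3) f \<open>f = {x,y}\<close> by auto
    thus "f \<in> M1" using \<open>g \<in> M1\<close> by simp
  qed
qed (rule assms(3))

lemma PM_other:
  assumes "PM V M" "e \<in> M" "a \<in> e" shows "\<exists>a'. e = {a,a'} \<and> a' \<noteq> a \<and> a' \<in> V"
proof -
  obtain x y where "e = {x,y}" "x \<noteq> y" "x \<in> V" "y \<in> V" using PM_edge2[OF assms(1,2)] by blast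
  thus ?thesis using assms(3) by (auto simp: insert_commute)
qed

lemma PM_finite_set: "finite V \<Longrightarrow> finite {M. PM V M}"
  by (rule finite_subset[of _ "Pow (C2 V)"]) (auto simp: PM_iff C2_finite)

lemma neg_exists:
  fixes s :: "nat set \<Rightarrow> int"
  assumes fin: "finite V" and vals: "\<forall>e\<in>C2 V. s e \<in> {-1,1}" and tot: "sum s (C2 V) = 0"
    and nz: "\<forall>M. PM V M \<longrightarrow> sum s M \<noteq> 0" and ex: "PM V M0"
  shows "\<exists>M. PM V M \<and> sum s M < 0"
proof (rule ccontr)
  assume "\<not> ?thesis"
  hence pos: "\<And>M. PM V M \<Longrightarrow> sum s M > 0" using nz by force
  let ?S = "{M. PM V M}"
  have fS: "finite (sum s ` ?S)" using PM_finite_set[OF fin] by simp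
  have neS: "sum s ` ?S \<noteq> {}" using ex by blast
  obtain M where M: "PM V M" and Mmin: "sum s M = Min (sum s ` ?S)"
    using Min_in[OF fS neS] by auto
  have minM: "\<And>M'. PM V M' \<Longrightarrow> sum s M \<le> sum s M'"
    unfolding Mmin using fS by (intro Min_le) auto
  have finM: "finite M" using PM_finite[OF fin M] .
  have Yge: "\<forall>P\<in>C2 M. 2 * (\<Sum>e\<in>P. s e) \<le> Yc s P"
  proof
    fix P assume "P \<in> C2 M"
    then obtain e f where P: "P = {e,f}" "e \<noteq> f" "e \<in> M" "f \<in> M"
      unfolding complete_edges_def card_2_iff by blast
    obtain a b where ab: "e = {a,b}" "a \<noteq> b" using PM_edge2[OF M P(3)] by blast
    obtain c d where cd: "f = {c,d}" "c \<noteq> d" using PM_edge2[OF M P(4)] by blast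
    have "e \<inter> f = {}" using M P unfolding PM_iff by blast
    hence dist: "distinct [a,b,c,d]" using ab cd by auto
    have ab': "{a,b} \<in> M" and cd': "{c,d} \<in> M" and dc': "{d,c} \<in> M"
      using P ab cd by (auto simp: insert_commute)
    have "sum s M \<le> sum s (sw M a b c d)" by (rule minM[OF PM_sw[OF M ab' cd' dist]])
    hence i1: "s {a,b} + s {c,d} \<le> s {a,c} + s {b,d}" using sum_sw[OF M finM ab' cd' dist, of s] by simp
    have dist2: "distinct [a,b,d,c]" using dist by auto
    have "sum s M \<le> sum s (sw M a b d c)" by (rule minM[OF PM_sw[OF M ab' dc' dist2]])
    hence i2: "s {a,b} + s {c,d} \<le> s {a,d} + s {b,c}" using sum_sw[OF M finM ab' dc' dist2, of s]
      by (simp add: insert_commute)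
    have "(\<Sum>e\<in>P. s e) = s {a,b} + s {c,d}" using P ab cd by simp
    moreover have "Yc s P = s {a,c} + s {a,d} + s {b,c} + s {b,d}"
      using Y_expand[OF dist, of s] P ab cd by simp
    ultimately show "2 * (\<Sum>e\<in>P. s e) \<le> Yc s P" using i1 i2 by simp
  qed
  have dec: "sum s (C2 V) = sum s M + (\<Sum>P\<in>C2 M. Yc s P)"
  proof -
    have "sum s (C2 (\<Union>M)) = sum s M + (\<Sum>P\<in>C2 M. Yc s P)"
      using finM M PM_edge[OF M] unfolding PM_iff by (intro decomp) auto
    thus ?thesis using M unfolding PM_iff by simp
  qed
  have "(\<Sum>P\<in>C2 M. 2 * (\<Sum>e\<in>P. s e)) \<le> (\<Sum>P\<in>C2 M. Yc s P)"
    using Yge by (intro sum_mono) auto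
  moreover have "(\<Sum>P\<in>C2 M. 2 * (\<Sum>e\<in>P. s e)) = 2 * ((int (card M) - 1) * sum s M)"
    using pair_sum[OF finM, of s] by (simp add: sum_distrib_left[symmetric])
  ultimately have ge: "sum s (C2 V) \<ge> sum s M + 2 * ((int (card M) - 1) * sum s M)" using dec by simp
  have p: "sum s M > 0" using pos[OF M] .
  hence "M \<noteq> {}" by auto
  hence "card M \<ge> 1" using finM by (simp add: Suc_le_eq card_gt_0_iff)
  hence "0 \<le> (int (card M) - 1) * sum s M" using p by (intro mult_nonneg_nonneg) auto
  thus False using ge p tot by linarith
qed

lemma crossing:
  fixes s :: "nat set \<Rightarrow> int"
  assumes fin: "finite V" and nz: "\<forall>M. PM V M \<longrightarrow> sum s M \<noteq> 0"
  shows "PM V M1 \<Longrightarrow> PM V M2 \<Longrightarrow> sum s M1 < 0 \<Longrightarrow> 0 < sum s M2 \<Longrightarrow>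
    \<exists>N a b c d. PM V N \<and> {a,b} \<in> N \<and> {c,d} \<in> N \<and> distinct [a,b,c,d] \<and> sum s N < 0 \<and> 0 < sum s (sw N a b c d)"
proof (induction "card (M2 - M1)" arbitrary: M2 rule: less_induct)
  case less
  note M1 = less.prems(1) and M2 = less.prems(2)
  have "M1 \<noteq> M2" using less.prems by auto
  hence "\<not> M1 \<subseteq> M2" using PM_sub_eq[OF M1 M2] by blast
  then obtain e where e: "e \<in> M1" "e \<notin> M2" by blast
  obtain a b where ab: "e = {a,b}" "a \<noteq> b" "a \<in> V" "b \<in> V" using PM_edge2[OF M1 e(1)] by blast
  obtain e1 where e1: "e1 \<in> M2" "a \<in> e1" using PM_cover[OF M2 ab(3)] by blast
  obtain a' where a': "e1 = {a,a'}" "a' \<noteq> a" using PM_other[OF M2 e1] by blast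
  obtain e2 where e2: "e2 \<in> M2" "b \<in> e2" using PM_cover[OF M2 ab(4)] by blast
  obtain b' where b': "e2 = {b,b'}" "b' \<noteq> b" using PM_other[OF M2 e2] by blast
  have a'b: "a' \<noteq> b" using e ab e1 a' by auto
  have b'a: "b' \<noteq> a" using e ab e2 b' by (auto simp: insert_commute)
  have a'b': "a' \<noteq> b'"
  proof
    assume "a' = b'"
    hence "e1 = e2" using PM_uniq[OF M2 e1(1) e2(1), of a'] a' b' by auto
    thus False using a' b' ab(2) a'b e2(2) by auto
  qed
  have dist: "distinct [a,a',b,b']" using ab(2) a' b' a'b b'a a'b' by auto
  have in1: "{a,a'} \<in> M2" "{b,b'} \<in> M2" using e1 e2 a' b' by auto
  have nin1: "{a,a'} \<notin> M1"
  proof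
    assume "{a,a'} \<in> M1"
    hence "{a,a'} = e" using PM_uniq[OF M1 _ e(1), of "{a,a'}" a] ab by auto
    thus False using ab a' a'b by (auto simp: doubleton_eq_iff)
  qed
  have nin2: "{b,b'} \<notin> M1"
  proof
    assume "{b,b'} \<in> M1"
    hence "{b,b'} = e" using PM_uniq[OF M1 _ e(1), of "{b,b'}" b] ab by auto
    thus False using ab b' b'a by (auto simp: doubleton_eq_iff)
  qed
  define M3 where "M3 = sw M2 a a' b b'"
  have M3: "PM V M3" unfolding M3_def by (rule PM_sw[OF M2 in1 dist])
  have finM2: "finite M2" using PM_finite[OF fin M2] .
  have "M3 - M1 \<subseteq> insert {a',b'} ((M2 - M1) - {{a,a'},{b,b'}})"
    unfolding M3_def sw_def using e ab by auto
  hence "card (M3 - M1) \<le> card (insert {a',b'} ((M2 - M1) - {{a,a'},{b,b'}}))"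
    using finM2 by (intro card_mono) auto
  also have "\<dots> \<le> Suc (card ((M2 - M1) - {{a,a'},{b,b'}}))" by (simp add: card_insert_le_m1)
  also have "card ((M2 - M1) - {{a,a'},{b,b'}}) = card (M2 - M1) - 2"
  proof -
    have "{a,a'} \<noteq> {b,b'}" using dist by (auto simp: doubleton_eq_iff)
    moreover have "{{a,a'},{b,b'}} \<subseteq> M2 - M1" using in1 nin1 nin2 by auto
    ultimately show ?thesis using finM2 by (subst card_Diff_subset) auto
  qed
  finally have lt: "card (M3 - M1) < card (M2 - M1)"
  proof -
    assume h: "card (M3 - M1) \<le> Suc (card (M2 - M1) - 2)"
    have "{{a,a'},{b,b'}} \<subseteq> M2 - M1" using in1 nin1 nin2 by auto
    moreover have "card {{a,a'},{b,b'}} = 2" using dist by (auto simp: doubleton_eq_iff)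
    ultimately have "2 \<le> card (M2 - M1)" using finM2 by (metis card_mono finite_Diff)
    thus ?thesis using h by linarith
  qed
  show ?case
  proof (cases "sum s M3 < 0")
    case True
    have in3: "{a,b} \<in> M3" "{a',b'} \<in> M3" unfolding M3_def sw_def by auto
    have dist3: "distinct [a,b,a',b']" using dist by auto
    have nin: "{a',b'} \<notin> M2"
    proof
      assume "{a',b'} \<in> M2"
      hence "{a',b'} = e1" using PM_uniq[OF M2 _ e1(1), of "{a',b'}" a'] a' by auto
      thus False using a' b'a a'b' by (auto simp: doubleton_eq_iff)
    qed
    have "sw M3 a b a' b' = M2"
      unfolding M3_def sw_def using in1 nin e ab by auto
    thus ?thesis using M3 in3 dist3 True less.prems(4) by metis
  next
    case False
    hence "0 < sum s M3" using nz M3 by force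
    thus ?thesis using less.hyps[OF lt M1 M3 less.prems(3)] by blast
  qed
qed



lemma bool_pair:
  fixes e f p q r w :: int
  assumes "e \<in> {-1,1}" "f \<in> {-1,1}" "p \<in> {-1,1}" "q \<in> {-1,1}" "r \<in> {-1,1}" "w \<in> {-1,1}"
    "-2 - e - f + p + q \<noteq> 0" "2 - e - f + p + q \<noteq> 0" "-2 - e - f + r + w \<noteq> 0" "2 - e - f + r + w \<noteq> 0"
  shows "4 dvd (p + r + w + q - 2 * (e + f))"
  using assms by auto

lemma bool_six0:
  fixes sad sbc t xa xb xc xd ya yb yc yd :: int
  assumes "sad = -1 \<or> sad = 1" "sbc = -1 \<or> sbc = 1" "t = -1 \<or> t = 1" "xa = -1 \<or> xa = 1" "xb = -1 \<or> xb = 1" "xc = -1 \<or> xc = 1" "xd = -1 \<or> xd = 1"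
    "ya = -1 \<or> ya = 1" "yb = -1 \<or> yb = 1" "yc = -1 \<or> yc = 1" "yd = -1 \<or> yd = 1" "sad + sbc \<noteq> 0"
    "-1-t+xa+yb \<noteq> 0" "-1-t+xb+ya \<noteq> 0" "-1-t+xc+yd \<noteq> 0" "-1-t+xd+yc \<noteq> 0"
    "1-t+xa+yc \<noteq> 0" "1-t+xc+ya \<noteq> 0" "1-t+xb+yd \<noteq> 0" "1-t+xd+yb \<noteq> 0"
    "sbc-t+xa+yd \<noteq> 0" "sbc-t+xd+ya \<noteq> 0" "sad-t+xb+yc \<noteq> 0" "sad-t+xc+yb \<noteq> 0"
  shows "xa + ya + xb + yb + xc + yc + xd + yd = -8 \<or> xa + ya + xb + yb + xc + yc + xd + yd = -4 \<or> xa + ya + xb + yb + xc + yc + xd + yd = 0 \<or> xa + ya + xb + yb + xc + yc + xd + yd = 4 \<or> xa + ya + xb + yb + xc + yc + xd + yd = 8"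
  using assms by smt

lemma bool_six:
  fixes sad sbc t xa xb xc xd ya yb yc yd :: int
  assumes "sad \<in> {-1,1}" "sbc \<in> {-1,1}" "t \<in> {-1,1}" "xa \<in> {-1,1}" "xb \<in> {-1,1}" "xc \<in> {-1,1}" "xd \<in> {-1,1}"
    "ya \<in> {-1,1}" "yb \<in> {-1,1}" "yc \<in> {-1,1}" "yd \<in> {-1,1}" "sad + sbc \<noteq> 0"
    "-1-t+xa+yb \<noteq> 0" "-1-t+xb+ya \<noteq> 0" "-1-t+xc+yd \<noteq> 0" "-1-t+xd+yc \<noteq> 0"
    "1-t+xa+yc \<noteq> 0" "1-t+xc+ya \<noteq> 0" "1-t+xb+yd \<noteq> 0" "1-t+xd+yb \<noteq> 0"
    "sbc-t+xa+yd \<noteq> 0" "sbc-t+xd+ya \<noteq> 0" "sad-t+xb+yc \<noteq> 0" "sad-t+xc+yb \<noteq> 0"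
  shows "4 dvd (xa + ya + xb + yb + xc + yc + xd + yd)"
proof -
  have "xa + ya + xb + yb + xc + yc + xd + yd = -8 \<or> xa + ya + xb + yb + xc + yc + xd + yd = -4 \<or> xa + ya + xb + yb + xc + yc + xd + yd = 0 \<or> xa + ya + xb + yb + xc + yc + xd + yd = 4 \<or> xa + ya + xb + yb + xc + yc + xd + yd = 8"
    by (rule bool_six0) (use assms in auto)
  thus ?thesis by auto
qed



lemma sw_nz:
  fixes s :: "nat set \<Rightarrow> int"
  assumes "finite V" "\<forall>M. PM V M \<longrightarrow> sum s M \<noteq> 0" "PM V K" "{a,b} \<in> K" "{c,d} \<in> K" "distinct [a,b,c,d]"
  shows "sum s K - s {a,b} - s {c,d} + s {a,c} + s {b,d} \<noteq> 0"
  using assms(2) PM_sw[OF assms(3-6)] sum_sw[OF assms(3) PM_finite[OF assms(1,3)] assms(4-6), of s] by metis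

lemma vals2:
  fixes s :: "nat set \<Rightarrow> int"
  assumes "\<forall>e\<in>C2 V. s e \<in> {-1,1}" "u \<in> V" "v \<in> V" "u \<noteq> v"
  shows "s {u,v} \<in> {-1,1}"
  using assms by (auto simp: complete_edges_def)

lemma PM_exists: "PM {0..<4*(n::nat)} ((\<lambda>i. {2*i, 2*i+1}) ` {0..<2*n})"
  unfolding PM_iff
proof (intro conjI)
  show "(\<lambda>i. {2*i, 2*i+1}) ` {0..<2*n} \<subseteq> C2 {0..<4*n}"
    by (auto simp: complete_edges_def)
  show "\<Union>((\<lambda>i. {2*i, 2*i+1}) ` {0..<2*n}) = {0..<4*n}"
  proof
    show "\<Union>((\<lambda>i. {2*i, 2*i+1}) ` {0..<2*n}) \<subseteq> {0..<4*n}" by auto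
    show "{0..<4*n} \<subseteq> \<Union>((\<lambda>i. {2*i, 2*i+1}) ` {0..<2*n})"
    proof
      fix v assume "v \<in> {0..<4*n}"
      hence "v div 2 \<in> {0..<2*n}" "v \<in> {2*(v div 2), 2*(v div 2)+1}" by auto
      thus "v \<in> \<Union>((\<lambda>i. {2*i, 2*i+1}) ` {0..<2*n})" by blast
    qed
  qed
  show "\<forall>e\<in>(\<lambda>i. {2*i, 2*i+1}) ` {0..<2*n}. \<forall>f\<in>(\<lambda>i. {2*i, 2*i+1}) ` {0..<2*n}. e \<noteq> f \<longrightarrow> e \<inter> f = {}"
    by (auto; presburger)
qed


theorem theorem1:
  fixes n :: nat and \<sigma> :: "nat set \<Rightarrow> int"
  assumes "n \<ge> 1"
    and "\<forall>e\<in>complete_edges {0..<4*n}. \<sigma> e \<in> {-1, 1}"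
    and "(\<Sum>e\<in>complete_edges {0..<4*n}. \<sigma> e) = 0"
  shows "\<exists>M. perfect_matching_complete {0..<4*n} M \<and> (\<Sum>e\<in>M. \<sigma> e) = 0"
proof (rule ccontr)
  define V where "V = {0..<4*n}"
  assume "\<not> ?thesis"
  hence nz: "\<forall>M. PM V M \<longrightarrow> sum \<sigma> M \<noteq> 0" unfolding V_def by blast
  have fin: "finite V" unfolding V_def by simp
  have vals: "\<forall>e\<in>C2 V. \<sigma> e \<in> {-1,1}" using assms(2) unfolding V_def by simp
  have tot: "sum \<sigma> (C2 V) = 0" using assms(3) unfolding V_def by simp
  have cardV: "card V = 4 * n" unfolding V_def by simp
  have ex: "PM V ((\<lambda>i. {2*i, 2*i+1}) ` {0..<2*n})" unfolding V_def by (rule PM_exists)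
  obtain M1 where M1: "PM V M1" "sum \<sigma> M1 < 0"
    using neg_exists[OF fin vals tot nz ex] by blast
  have vals': "\<forall>e\<in>C2 V. - \<sigma> e \<in> {-1,1}" using vals by auto
  have tot': "sum (\<lambda>e. - \<sigma> e) (C2 V) = 0" using tot by (simp add: sum_negf)
  have nz': "\<forall>M. PM V M \<longrightarrow> sum (\<lambda>e. - \<sigma> e) M \<noteq> 0" using nz by (simp add: sum_negf)
  obtain M2 where M2: "PM V M2" "sum (\<lambda>e. - \<sigma> e) M2 < 0"
    using neg_exists[OF fin vals' tot' nz' ex] by blast
  hence M2': "0 < sum \<sigma> M2" by (simp add: sum_negf)
  obtain N a b c d where N: "PM V N" "{a,b} \<in> N" "{c,d} \<in> N" "distinct [a,b,c,d]"
      "sum \<sigma> N < 0" "0 < sum \<sigma> (sw N a b c d)"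
    using crossing[OF fin nz M1(1) M2(1) M1(2) M2'] by blast
  define Mp where "Mp = sw N a b c d"
  have Mp: "PM V Mp" unfolding Mp_def by (rule PM_sw[OF N(1-4)])
  have finN: "finite N" using PM_finite[OF fin N(1)] .
  have finMp: "finite Mp" using PM_finite[OF fin Mp] .
  have abcdV: "a \<in> V" "b \<in> V" "c \<in> V" "d \<in> V" using PM_edge[OF N(1) N(2)] PM_edge[OF N(1) N(3)] by auto
  have sMp: "sum \<sigma> Mp = sum \<sigma> N - \<sigma> {a,b} - \<sigma> {c,d} + \<sigma> {a,c} + \<sigma> {b,d}"
    unfolding Mp_def by (rule sum_sw[OF N(1) finN N(2-4)])
  have cN: "card N = 2 * n" using PM_card[OF fin N(1)] cardV by simp
  have cMp: "card Mp = 2 * n" using PM_card[OF fin Mp] cardV by simp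
  have evN: "even (sum \<sigma> N)"
    using sum_pm1_even[OF finN, of \<sigma>] vals N(1) cN unfolding PM_iff by auto
  have evMp: "even (sum \<sigma> Mp)"
    using sum_pm1_even[OF finMp, of \<sigma>] vals Mp cMp unfolding PM_iff by auto
  have v: "\<And>u w. u \<in> V \<Longrightarrow> w \<in> V \<Longrightarrow> u \<noteq> w \<Longrightarrow> \<sigma> {u,w} \<in> {-1,1}"
    using vals2[OF vals] by blast
  have le1: "\<And>u w. u \<in> V \<Longrightarrow> w \<in> V \<Longrightarrow> u \<noteq> w \<Longrightarrow> -1 \<le> \<sigma> {u,w} \<and> \<sigma> {u,w} \<le> 1"
    using v by fastforce
  have Nle: "sum \<sigma> N \<le> -2" using evN N(5) by (auto elim!: evenE)
  have Mpge: "sum \<sigma> Mp \<ge> 2" using evMp N(6) unfolding Mp_def[symmetric] by (auto elim!: evenE)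
  have b1: "-1 \<le> \<sigma> {a,b}" "-1 \<le> \<sigma> {c,d}" "\<sigma> {a,c} \<le> 1" "\<sigma> {b,d} \<le> 1"
    using le1 abcdV N(4) by auto
  have sab: "\<sigma> {a,b} = -1" and scd: "\<sigma> {c,d} = -1" and sac: "\<sigma> {a,c} = 1" and sbd: "\<sigma> {b,d} = 1"
    and sN: "sum \<sigma> N = -2"
    using Nle Mpge sMp b1 by linarith+
  define R where "R = N - {{a,b},{c,d}}"
  have ne: "{a,b} \<noteq> {c,d}" using N(4) by (auto simp: doubleton_eq_iff)
  have hN: "N = insert {a,b} (insert {c,d} R)" unfolding R_def using N(2,3) by auto
  have abR: "{a,b} \<notin> insert {c,d} R" unfolding R_def using ne by auto
  have disjN: "\<forall>e\<in>N. \<forall>f\<in>N. e \<noteq> f \<longrightarrow> e \<inter> f = {}" using N(1) unfolding PM_iff by blast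
  have cdR: "{c,d} \<notin> R" unfolding R_def by auto
  have finR: "finite R" unfolding R_def using finN by simp
  have sR: "sum \<sigma> R = 0" using sN hN abR cdR finR sab scd by simp
  have RN: "R \<subseteq> N" unfolding R_def by auto
  have RMp: "R \<subseteq> Mp" unfolding R_def Mp_def sw_def by auto
  define Q where "Q = sw N a b d c"
  have dcN: "{d,c} \<in> N" using N(3) by (simp add: insert_commute)
  have dist2: "distinct [a,b,d,c]" using N(4) by auto
  have Q: "PM V Q" unfolding Q_def by (rule PM_sw[OF N(1) N(2) dcN dist2])
  have sQ: "sum \<sigma> Q = \<sigma> {a,d} + \<sigma> {b,c}"
    unfolding Q_def using sum_sw[OF N(1) finN N(2) dcN dist2, of \<sigma>] sN sab scd
    by (simp add: insert_commute)
  have nzQ: "\<sigma> {a,d} + \<sigma> {b,c} \<noteq> 0" using nz Q sQ by metis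
  have RQ: "R \<subseteq> Q" unfolding R_def Q_def sw_def by auto
  have adQ: "{a,d} \<in> Q" "{b,c} \<in> Q" unfolding Q_def sw_def by auto
  have acMp: "{a,c} \<in> Mp" "{b,d} \<in> Mp" unfolding Mp_def sw_def by auto
  have Ravoid: "\<And>f. f \<in> R \<Longrightarrow> f \<inter> {a,b,c,d} = {}"
  proof -
    fix f assume f: "f \<in> R"
    hence fN: "f \<in> N" and f1: "f \<noteq> {a,b}" and f2: "f \<noteq> {c,d}" unfolding R_def by auto
    have "f \<inter> {a,b} = {}" using fN N(2) f1 by (rule disjN[rule_format])
    moreover have "f \<inter> {c,d} = {}" using fN N(3) f2 by (rule disjN[rule_format])
    ultimately show "f \<inter> {a,b,c,d} = {}" by blast
  qed
  have swnz: "\<And>K u w x y. PM V K \<Longrightarrow> {u,w} \<in> K \<Longrightarrow> {x,y} \<in> K \<Longrightarrow> distinct [u,w,x,y] \<Longrightarrow>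
      sum \<sigma> K - \<sigma> {u,w} - \<sigma> {x,y} + \<sigma> {u,x} + \<sigma> {w,y} \<noteq> 0"
    by (rule sw_nz[OF fin nz])
  have dec: "sum \<sigma> (C2 V) = sum \<sigma> N + (\<Sum>P\<in>C2 N. Yc \<sigma> P)"
  proof -
    have "sum \<sigma> (C2 (\<Union>N)) = sum \<sigma> N + (\<Sum>P\<in>C2 N. Yc \<sigma> P)"
      using finN N(1) PM_edge[OF N(1)] unfolding PM_iff by (intro decomp) auto
    thus ?thesis using N(1) unfolding PM_iff by simp
  qed
  have split: "(\<Sum>P\<in>C2 N. Yc \<sigma> P) = (\<Sum>P\<in>C2 R. Yc \<sigma> P) + Yc \<sigma> {{a,b},{c,d}}
      + (\<Sum>f\<in>R. Yc \<sigma> {{a,b},f} + Yc \<sigma> {{c,d},f})"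
  proof -
    have "(\<Sum>P\<in>C2 N. Yc \<sigma> P) = (\<Sum>P\<in>C2 (insert {c,d} R). Yc \<sigma> P) + (\<Sum>f\<in>insert {c,d} R. Yc \<sigma> {{a,b},f})"
      unfolding hN by (rule sum_C2_insert) (use finR abR in auto)
    also have "(\<Sum>P\<in>C2 (insert {c,d} R). Yc \<sigma> P) = (\<Sum>P\<in>C2 R. Yc \<sigma> P) + (\<Sum>f\<in>R. Yc \<sigma> {{c,d},f})"
      by (rule sum_C2_insert[OF finR cdR])
    also have "(\<Sum>f\<in>insert {c,d} R. Yc \<sigma> {{a,b},f}) = Yc \<sigma> {{a,b},{c,d}} + (\<Sum>f\<in>R. Yc \<sigma> {{a,b},f})"
      using finR cdR by simp
    finally show ?thesis by (simp add: sum.distrib)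
  qed
  have D3: "4 dvd Yc \<sigma> {{a,b},{c,d}}"
  proof -
    have "Yc \<sigma> {{a,b},{c,d}} = \<sigma> {a,c} + \<sigma> {a,d} + \<sigma> {b,c} + \<sigma> {b,d}" by (rule Y_expand[OF N(4)])
    moreover have "\<sigma> {a,d} \<in> {-1,1}" "\<sigma> {b,c} \<in> {-1,1}" using v abcdV N(4) by auto
    ultimately show ?thesis using sac sbd nzQ by auto
  qed
  have D1: "4 dvd (\<Sum>P\<in>C2 R. Yc \<sigma> P)"
  proof -
    have each: "\<forall>P\<in>C2 R. 4 dvd (Yc \<sigma> P - 2 * (\<Sum>e\<in>P. \<sigma> e))"
    proof
      fix P assume "P \<in> C2 R"
      then obtain e f where P: "P = {e,f}" "e \<noteq> f" "e \<in> R" "f \<in> R"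
        unfolding complete_edges_def card_2_iff by blast
      have eN: "e \<in> N" "f \<in> N" using P RN by auto
      obtain x y where xy: "e = {x,y}" "x \<noteq> y" "x \<in> V" "y \<in> V" using PM_edge2[OF N(1) eN(1)] by blast
      obtain z w where zw: "f = {z,w}" "z \<noteq> w" "z \<in> V" "w \<in> V" using PM_edge2[OF N(1) eN(2)] by blast
      have "e \<inter> f = {}" using eN P(2) by (rule disjN[rule_format])
      hence dist: "distinct [x,y,z,w]" using xy zw by auto
      have dist': "distinct [x,y,w,z]" using dist by auto
      have e1: "{x,y} \<in> N" "{z,w} \<in> N" "{w,z} \<in> N" "{x,y} \<in> Mp" "{z,w} \<in> Mp" "{w,z} \<in> Mp"
        using P RN RMp xy zw by (auto simp: insert_commute)
      have wz: "\<sigma> {w,z} = \<sigma> {z,w}" by (simp add: insert_commute)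
      have c1: "sum \<sigma> N - \<sigma> {x,y} - \<sigma> {z,w} + \<sigma> {x,z} + \<sigma> {y,w} \<noteq> 0" by (rule swnz[OF N(1) e1(1,2) dist])
      have c2: "sum \<sigma> Mp - \<sigma> {x,y} - \<sigma> {z,w} + \<sigma> {x,z} + \<sigma> {y,w} \<noteq> 0" by (rule swnz[OF Mp e1(4,5) dist])
      have c3: "sum \<sigma> N - \<sigma> {x,y} - \<sigma> {w,z} + \<sigma> {x,w} + \<sigma> {y,z} \<noteq> 0" by (rule swnz[OF N(1) e1(1,3) dist'])
      have c4: "sum \<sigma> Mp - \<sigma> {x,y} - \<sigma> {w,z} + \<sigma> {x,w} + \<sigma> {y,z} \<noteq> 0" by (rule swnz[OF Mp e1(4,6) dist'])
      have sMp2: "sum \<sigma> Mp = 2" using sMp sN sab scd sac sbd by simp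
      have "4 dvd (\<sigma> {x,z} + \<sigma> {x,w} + \<sigma> {y,z} + \<sigma> {y,w} - 2 * (\<sigma> {x,y} + \<sigma> {z,w}))"
        apply (rule bool_pair)
        using v xy zw dist c1 c2 c3 c4 sN sMp2 wz by auto
      moreover have "Yc \<sigma> P = \<sigma> {x,z} + \<sigma> {x,w} + \<sigma> {y,z} + \<sigma> {y,w}"
        using Y_expand[OF dist, of \<sigma>] P xy zw by simp
      moreover have "(\<Sum>e\<in>P. \<sigma> e) = \<sigma> {x,y} + \<sigma> {z,w}" using P xy zw by simp
      ultimately show "4 dvd (Yc \<sigma> P - 2 * (\<Sum>e\<in>P. \<sigma> e))" by simp
    qed
    hence "4 dvd (\<Sum>P\<in>C2 R. Yc \<sigma> P - 2 * (\<Sum>e\<in>P. \<sigma> e))" by (intro dvd_sum) auto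
    moreover have "(\<Sum>P\<in>C2 R. Yc \<sigma> P - 2 * (\<Sum>e\<in>P. \<sigma> e)) = (\<Sum>P\<in>C2 R. Yc \<sigma> P) - 2 * ((int (card R) - 1) * sum \<sigma> R)"
      using pair_sum[OF finR, of \<sigma>] by (simp add: sum_subtractf sum_distrib_left[symmetric])
    ultimately show ?thesis using sR by simp
  qed
  have D2: "4 dvd (\<Sum>f\<in>R. Yc \<sigma> {{a,b},f} + Yc \<sigma> {{c,d},f})"
  proof (intro dvd_sum)
    fix f assume fR: "f \<in> R"
    have fN: "f \<in> N" using fR RN by auto
    obtain x y where xy: "f = {x,y}" "x \<noteq> y" "x \<in> V" "y \<in> V" using PM_edge2[OF N(1) fN] by blast
    have av: "x \<notin> {a,b,c,d}" "y \<notin> {a,b,c,d}" using Ravoid[OF fR] xy by auto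
    have xyK: "{x,y} \<in> N" "{x,y} \<in> Mp" "{x,y} \<in> Q" using fR RN RMp RQ xy by auto
    have baN: "{b,a} \<in> N" using N(2) by (simp add: insert_commute)
    have caMp: "{c,a} \<in> Mp" "{d,b} \<in> Mp" using acMp by (auto simp: insert_commute)
    have daQ: "{d,a} \<in> Q" "{c,b} \<in> Q" using adQ by (auto simp: insert_commute)
    have D: "\<And>u w. u \<in> {a,b,c,d} \<Longrightarrow> w \<in> {a,b,c,d} \<Longrightarrow> u \<noteq> w \<Longrightarrow> distinct [u,w,x,y]"
      using av xy by auto
    have sMp2: "sum \<sigma> Mp = 2" using sMp sN sab scd sac sbd by simp
    have eqs: "\<sigma> {b,a} = \<sigma> {a,b}" "\<sigma> {d,c} = \<sigma> {c,d}" "\<sigma> {c,a} = \<sigma> {a,c}" "\<sigma> {d,b} = \<sigma> {b,d}"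
      "\<sigma> {d,a} = \<sigma> {a,d}" "\<sigma> {c,b} = \<sigma> {b,c}" by (simp_all add: insert_commute)
    have k1: "sum \<sigma> N - \<sigma> {a,b} - \<sigma> {x,y} + \<sigma> {a,x} + \<sigma> {b,y} \<noteq> 0" by (rule swnz[OF N(1) N(2) xyK(1) D]) (use N(4) in auto)
    have k2: "sum \<sigma> N - \<sigma> {b,a} - \<sigma> {x,y} + \<sigma> {b,x} + \<sigma> {a,y} \<noteq> 0" by (rule swnz[OF N(1) baN xyK(1) D]) (use N(4) in auto)
    have k3: "sum \<sigma> N - \<sigma> {c,d} - \<sigma> {x,y} + \<sigma> {c,x} + \<sigma> {d,y} \<noteq> 0" by (rule swnz[OF N(1) N(3) xyK(1) D]) (use N(4) in auto)
    have k4: "sum \<sigma> N - \<sigma> {d,c} - \<sigma> {x,y} + \<sigma> {d,x} + \<sigma> {c,y} \<noteq> 0" by (rule swnz[OF N(1) dcN xyK(1) D]) (use N(4) in auto)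
    have k5: "sum \<sigma> Mp - \<sigma> {a,c} - \<sigma> {x,y} + \<sigma> {a,x} + \<sigma> {c,y} \<noteq> 0" by (rule swnz[OF Mp acMp(1) xyK(2) D]) (use N(4) in auto)
    have k6: "sum \<sigma> Mp - \<sigma> {c,a} - \<sigma> {x,y} + \<sigma> {c,x} + \<sigma> {a,y} \<noteq> 0" by (rule swnz[OF Mp caMp(1) xyK(2) D]) (use N(4) in auto)
    have k7: "sum \<sigma> Mp - \<sigma> {b,d} - \<sigma> {x,y} + \<sigma> {b,x} + \<sigma> {d,y} \<noteq> 0" by (rule swnz[OF Mp acMp(2) xyK(2) D]) (use N(4) in auto)
    have k8: "sum \<sigma> Mp - \<sigma> {d,b} - \<sigma> {x,y} + \<sigma> {d,x} + \<sigma> {b,y} \<noteq> 0" by (rule swnz[OF Mp caMp(2) xyK(2) D]) (use N(4) in auto)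
    have k9: "sum \<sigma> Q - \<sigma> {a,d} - \<sigma> {x,y} + \<sigma> {a,x} + \<sigma> {d,y} \<noteq> 0" by (rule swnz[OF Q adQ(1) xyK(3) D]) (use N(4) in auto)
    have k10: "sum \<sigma> Q - \<sigma> {d,a} - \<sigma> {x,y} + \<sigma> {d,x} + \<sigma> {a,y} \<noteq> 0" by (rule swnz[OF Q daQ(1) xyK(3) D]) (use N(4) in auto)
    have k11: "sum \<sigma> Q - \<sigma> {b,c} - \<sigma> {x,y} + \<sigma> {b,x} + \<sigma> {c,y} \<noteq> 0" by (rule swnz[OF Q adQ(2) xyK(3) D]) (use N(4) in auto)
    have k12: "sum \<sigma> Q - \<sigma> {c,b} - \<sigma> {x,y} + \<sigma> {c,x} + \<sigma> {b,y} \<noteq> 0" by (rule swnz[OF Q daQ(2) xyK(3) D]) (use N(4) in auto)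
    have vv: "\<sigma> {a,d} \<in> {-1,1}" "\<sigma> {b,c} \<in> {-1,1}" "\<sigma> {x,y} \<in> {-1,1}"
      "\<sigma> {a,x} \<in> {-1,1}" "\<sigma> {b,x} \<in> {-1,1}" "\<sigma> {c,x} \<in> {-1,1}" "\<sigma> {d,x} \<in> {-1,1}"
      "\<sigma> {a,y} \<in> {-1,1}" "\<sigma> {b,y} \<in> {-1,1}" "\<sigma> {c,y} \<in> {-1,1}" "\<sigma> {d,y} \<in> {-1,1}"
      using v abcdV xy av N(4) by auto
    have "4 dvd (\<sigma> {a,x} + \<sigma> {a,y} + \<sigma> {b,x} + \<sigma> {b,y} + \<sigma> {c,x} + \<sigma> {c,y} + \<sigma> {d,x} + \<sigma> {d,y})"
      apply (rule bool_six[OF vv nzQ])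
      using k1 k2 k3 k4 k5 k6 k7 k8 k9 k10 k11 k12 eqs sN sMp2 sQ sab scd sac sbd by simp_all
    moreover have "Yc \<sigma> {{a,b},f} = \<sigma> {a,x} + \<sigma> {a,y} + \<sigma> {b,x} + \<sigma> {b,y}"
      using Y_expand[of a b x y \<sigma>] xy av N(4) by auto
    moreover have "Yc \<sigma> {{c,d},f} = \<sigma> {c,x} + \<sigma> {c,y} + \<sigma> {d,x} + \<sigma> {d,y}"
      using Y_expand[of c d x y \<sigma>] xy av N(4) by auto
    ultimately show "4 dvd (Yc \<sigma> {{a,b},f} + Yc \<sigma> {{c,d},f})" by (simp add: algebra_simps)
  qed
  have "sum \<sigma> (C2 V) = -2 + ((\<Sum>P\<in>C2 R. Yc \<sigma> P) + Yc \<sigma> {{a,b},{c,d}}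
      + (\<Sum>f\<in>R. Yc \<sigma> {{a,b},f} + Yc \<sigma> {{c,d},f}))"
    using dec split sN by simp
  hence "4 dvd (sum \<sigma> (C2 V) + 2)" using D1 D2 D3 by simp
  thus False using tot by simp
qed

end
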